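(* For any $n\in\mathbb{Z}$, the group $\langle a,b\mid aba=ba^{n+1}b\rangle$ is isomorphic to the braid group $\mathbb{B}_3$ on three strands.
   Context: $\mathbb{B}_3=\langle x,y\mid xyx=yxy\rangle$ is the Artin braid group on three strands. *)

theory Defs
  imports "HOL-Algebra.Group"
begin

text \<open>Words in a free group: a letter is a pair (generator, inverted?).\<close>
type_synonym 'a fword = "('a \<times> bool) list"

definition word_inv :: "'a fword \<Rightarrow> 'a fword" where
  "word_inv w = rev (map (\<lambda>(x, e). (x, \<not> e)) w)"

definition gen_pow :: "'a \<Rightarrow> int \<Rightarrow> 'a fword" where
  "gen_pow x k = (if 0 \<le> k then replicate (nat k) (x, False) else replicate (nat (- k)) (x, True))"

definition gen :: "'a \<Rightarrow> 'a fword" where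
  "gen x = [(x, False)]"

inductive_set pres_rel :: "'a fword set \<Rightarrow> ('a fword \<times> 'a fword) set" for R where
  cancel: "(xs @ [(x, e), (x, \<not> e)] @ ys, xs @ ys) \<in> pres_rel R"
| relator: "r \<in> R \<Longrightarrow> (xs @ r @ ys, xs @ ys) \<in> pres_rel R"
| refl: "(w, w) \<in> pres_rel R"
| sym: "(u, v) \<in> pres_rel R \<Longrightarrow> (v, u) \<in> pres_rel R"
| trans: "(u, v) \<in> pres_rel R \<Longrightarrow> (v, w) \<in> pres_rel R \<Longrightarrow> (u, w) \<in> pres_rel R"

definition presentation :: "'a fword set \<Rightarrow> 'a fword set monoid" where
  "presentation R =
     \<lparr> carrier = UNIV // pres_rel R,
       mult = (\<lambda>A B. \<Union>u\<in>A. \<Union>v\<in>B. pres_rel R `` {u @ v}),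
       one = pres_rel R `` {[]} \<rparr>"

definition relation :: "'a fword \<Rightarrow> 'a fword \<Rightarrow> 'a fword" where
  "relation u v = u @ word_inv v"

datatype two_gens = GA | GB

definition braid3 :: "two_gens fword set monoid" where
  "braid3 = presentation
     {relation (gen GA @ gen GB @ gen GA) (gen GB @ gen GA @ gen GB)}"

definition G_n :: "int \<Rightarrow> two_gens fword set monoid" where
  "G_n n = presentation
     {relation (gen GA @ gen GB @ gen GA) (gen GB @ gen_pow GA (n + 1) @ gen GB)}"

end

theory Submission
  imports Defs
begin

abbreviation rel_in (\<open>_ \<sim>[_] _\<close> [60,0,60] 50) where
  "u \<sim>[R] v \<equiv> (u, v) \<in> pres_rel R"

lemma pr_app_left: "u \<sim>[R] v \<Longrightarrow> w @ u \<sim>[R] w @ v"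
proof (induction rule: pres_rel.induct)
  case (cancel xs x e ys) show ?case using pres_rel.cancel[of "w@xs" x e ys R] by simp
next
  case (relator r xs ys) thus ?case using pres_rel.relator[of r R "w@xs" ys] by simp
qed (auto intro: pres_rel.intros)

lemma pr_app_right: "u \<sim>[R] v \<Longrightarrow> u @ w \<sim>[R] v @ w"
proof (induction rule: pres_rel.induct)
  case (cancel xs x e ys) show ?case using pres_rel.cancel[of xs x e "ys@w" R] by simp
next
  case (relator r xs ys) thus ?case using pres_rel.relator[of r R xs "ys@w"] by simp
qed (auto intro: pres_rel.intros)

lemma pr_app: "u \<sim>[R] u' \<Longrightarrow> v \<sim>[R] v' \<Longrightarrow> u @ v \<sim>[R] u' @ v'"
  by (meson pr_app_left pr_app_right pres_rel.trans)

lemma pr_mid: "m \<sim>[R] m' \<Longrightarrow> xs @ m @ ys \<sim>[R] xs @ m' @ ys"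
  by (simp add: pr_app pres_rel.refl)

lemma pr_equiv: "equiv UNIV (pres_rel R)"
  unfolding equiv_def refl_on_def sym_def trans_def
  by (auto intro: pres_rel.intros)

lemma word_inv_app[simp]: "word_inv (u @ v) = word_inv v @ word_inv u"
  by (simp add: word_inv_def)
lemma word_inv_Cons[simp]: "word_inv ((x,e) # w) = word_inv w @ [(x, \<not> e)]"
  by (simp add: word_inv_def)
lemma word_inv_Nil[simp]: "word_inv [] = []"
  by (simp add: word_inv_def)
lemma word_inv_inv[simp]: "word_inv (word_inv w) = w"
  by (induction w) (auto simp: word_inv_def)

lemma inv_cancel1: "w @ word_inv w \<sim>[R] []"
proof (induction w)
  case Nil then show ?case by (simp add: pres_rel.refl)
next
  case (Cons a w)
  obtain x e where a: "a = (x,e)" by fastforce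
  have "a # w @ word_inv w @ [(x, \<not> e)] \<sim>[R] [a] @ [] @ [(x, \<not> e)]"
    using pr_mid[OF Cons.IH, of "[a]" "[(x, \<not> e)]"] by simp
  moreover have "[a] @ [] @ [(x, \<not> e)] \<sim>[R] []"
    using pres_rel.cancel[of "[]" x e "[]" R] a by simp
  ultimately show ?case using a by (auto intro: pres_rel.trans)
qed

lemma inv_cancel2: "word_inv w @ w \<sim>[R] []"
  using inv_cancel1[of "word_inv w" R] by simp

lemma pr_inv: assumes "w \<sim>[R] v" shows "word_inv w \<sim>[R] word_inv v"
proof -
  have "word_inv w @ [] \<sim>[R] word_inv w @ (v @ word_inv v)"
    by (rule pr_app_left, rule pres_rel.sym, rule inv_cancel1)
  moreover have "word_inv w @ (v @ word_inv v) \<sim>[R] word_inv w @ (w @ word_inv v)"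
    by (rule pr_app_left, rule pr_app_right, rule pres_rel.sym, rule assms)
  moreover have "(word_inv w @ w) @ word_inv v \<sim>[R] [] @ word_inv v"
    by (rule pr_app_right, rule inv_cancel2)
  ultimately show ?thesis by (auto intro: pres_rel.trans)
qed

definition subst :: "('a \<Rightarrow> 'b fword) \<Rightarrow> 'a fword \<Rightarrow> 'b fword" where
  "subst s w = concat (map (\<lambda>(x,e). if e then word_inv (s x) else s x) w)"

lemma subst_app[simp]: "subst s (u @ v) = subst s u @ subst s v"
  by (simp add: subst_def)
lemma subst_Nil[simp]: "subst s [] = []"
  by (simp add: subst_def)
lemma subst_Cons[simp]: "subst s ((x,e) # w) = (if e then word_inv (s x) else s x) @ subst s w"
  by (simp add: subst_def)
lemma subst_inv[simp]: "subst s (word_inv w) = word_inv (subst s w)"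
  by (induction w) auto
lemma subst_comp: "subst t (subst s u) = subst (\<lambda>x. subst t (s x)) u"
  by (induction u) auto

lemma subst_resp:
  assumes R: "\<And>r. r \<in> R \<Longrightarrow> subst s r \<sim>[R'] []"
  shows "u \<sim>[R] v \<Longrightarrow> subst s u \<sim>[R'] subst s v"
proof (induction rule: pres_rel.induct)
  case (cancel xs x e ys)
  have "(if e then word_inv (s x) else s x) @ (if \<not> e then word_inv (s x) else s x) \<sim>[R'] []"
    using inv_cancel1 inv_cancel2 by auto
  from pr_mid[OF this, of "subst s xs" "subst s ys"] show ?case by simp
next
  case (relator r xs ys)
  from pr_mid[OF R[OF relator], of "subst s xs" "subst s ys"] show ?case by simp
qed (auto intro: pres_rel.intros)

lemma subst_id:
  assumes "\<And>x. s x \<sim>[R] [(x,False)]"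
  shows "subst s u \<sim>[R] u"
proof (induction u)
  case Nil then show ?case by (simp add: pres_rel.refl)
next
  case (Cons a u)
  obtain x e where a: "a = (x,e)" by fastforce
  have "(if e then word_inv (s x) else s x) \<sim>[R] [(x,e)]"
    using assms pr_inv[OF assms[of x]] by (auto simp: word_inv_def)
  from pr_app[OF this Cons.IH] show ?case using a by simp
qed

definition ind :: "('a \<Rightarrow> 'b fword) \<Rightarrow> 'b fword set \<Rightarrow> 'a fword set \<Rightarrow> 'b fword set" where
  "ind s R' A = (\<Union>u\<in>A. pres_rel R' `` {subst s u})"

lemma class_eq: "u \<sim>[R] v \<Longrightarrow> pres_rel R `` {u} = pres_rel R `` {v}"
  using pr_equiv by (metis equiv_class_eq)

lemma ind_class:
  assumes R: "\<And>r. r \<in> R \<Longrightarrow> subst s r \<sim>[R'] []"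
  shows "ind s R' (pres_rel R `` {u}) = pres_rel R' `` {subst s u}"
proof -
  have eq: "\<And>v. (u, v) \<in> pres_rel R \<Longrightarrow> pres_rel R' `` {subst s v} = pres_rel R' `` {subst s u}"
    apply (rule class_eq)
    apply (rule subst_resp[where R=R, OF R])
     apply assumption
    apply (erule pres_rel.sym)
    done
  have "ind s R' (pres_rel R `` {u}) = (\<Union>v\<in>pres_rel R `` {u}. pres_rel R' `` {subst s u})"
    unfolding ind_def using eq by (simp cong: SUP_cong_simp del: UN_constant)
  also have "\<dots> = pres_rel R' `` {subst s u}"
  proof -
    have ne: "pres_rel R `` {u} \<noteq> {}" using pres_rel.refl[of u R] by blast
    show ?thesis by (simp only: UN_constant if_not_P[OF ne])
  qed
  finally show ?thesis .
qed

lemma mult_class: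
  "mult (presentation R) (pres_rel R `` {u}) (pres_rel R `` {v}) = pres_rel R `` {u @ v}"
proof -
  have eq: "\<And>u' v'. (u, u') \<in> pres_rel R \<Longrightarrow> (v, v') \<in> pres_rel R \<Longrightarrow>
     pres_rel R `` {u' @ v'} = pres_rel R `` {u @ v}"
    by (rule class_eq, rule pr_app; erule pres_rel.sym)
  have "mult (presentation R) (pres_rel R `` {u}) (pres_rel R `` {v}) =
     (\<Union>u'\<in>pres_rel R `` {u}. \<Union>v'\<in>pres_rel R `` {v}. pres_rel R `` {u @ v})"
    unfolding presentation_def monoid.simps using eq by (simp cong: SUP_cong_simp del: UN_constant)
  also have "\<dots> = pres_rel R `` {u @ v}"
  proof -
    have ne: "pres_rel R `` {u} \<noteq> {}" using pres_rel.refl[of u R] by blast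
    have ne2: "pres_rel R `` {v} \<noteq> {}" using pres_rel.refl[of v R] by blast
    show ?thesis by (simp only: UN_constant if_not_P[OF ne] if_not_P[OF ne2])
  qed
  finally show ?thesis .
qed

lemma carrier_pres: "carrier (presentation R) = {pres_rel R `` {u} | u. True}"
  unfolding presentation_def quotient_def by auto

lemma iso_pres:
  assumes R1: "\<And>r. r \<in> R \<Longrightarrow> subst s r \<sim>[R'] []"
    and R2: "\<And>r. r \<in> R' \<Longrightarrow> subst t r \<sim>[R] []"
    and C1: "\<And>x. subst t (s x) \<sim>[R] [(x,False)]"
    and C2: "\<And>x. subst s (t x) \<sim>[R'] [(x,False)]"
  shows "presentation R \<cong> presentation R'"
proof (rule is_isoI)
  let ?f = "ind s R'" and ?g = "ind t R"
  have hom: "?f \<in> hom (presentation R) (presentation R')"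
  proof (rule homI)
    show "\<And>x. x \<in> carrier (presentation R) \<Longrightarrow> ?f x \<in> carrier (presentation R')"
      unfolding carrier_pres by (auto simp: ind_class[where R=R, OF R1])
    show "\<And>x y. x \<in> carrier (presentation R) \<Longrightarrow> y \<in> carrier (presentation R) \<Longrightarrow>
       ?f (x \<otimes>\<^bsub>presentation R\<^esub> y) = ?f x \<otimes>\<^bsub>presentation R'\<^esub> ?f y"
      unfolding carrier_pres by (auto simp: ind_class[where R=R, OF R1] mult_class)
  qed
  have L1: "\<And>u. ?g (?f (pres_rel R `` {u})) = pres_rel R `` {u}"
  proof -
    fix u
    have "?g (?f (pres_rel R `` {u})) = pres_rel R `` {subst t (subst s u)}"
      by (simp add: ind_class[where R=R, OF R1] ind_class[where R=R', OF R2])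
    also have "\<dots> = pres_rel R `` {u}"
      unfolding subst_comp by (rule class_eq, rule subst_id, rule C1)
    finally show "?g (?f (pres_rel R `` {u})) = pres_rel R `` {u}" .
  qed
  have L2: "\<And>u. ?f (?g (pres_rel R' `` {u})) = pres_rel R' `` {u}"
  proof -
    fix u
    have "?f (?g (pres_rel R' `` {u})) = pres_rel R' `` {subst s (subst t u)}"
      by (simp add: ind_class[where R=R, OF R1] ind_class[where R=R', OF R2])
    also have "\<dots> = pres_rel R' `` {u}"
      unfolding subst_comp by (rule class_eq, rule subst_id, rule C2)
    finally show "?f (?g (pres_rel R' `` {u})) = pres_rel R' `` {u}" .
  qed
  have bij: "bij_betw ?f (carrier (presentation R)) (carrier (presentation R'))"
  proof (rule bij_betw_byWitness[where f'="?g"])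
    show "\<forall>a\<in>carrier (presentation R). ?g (?f a) = a"
      unfolding carrier_pres using L1 by blast
    show "\<forall>a\<in>carrier (presentation R'). ?f (?g a) = a"
      unfolding carrier_pres using L2 by blast
    show "?f ` carrier (presentation R) \<subseteq> carrier (presentation R')"
      unfolding carrier_pres using ind_class[where R=R, OF R1] by blast
    show "?g ` carrier (presentation R') \<subseteq> carrier (presentation R)"
      unfolding carrier_pres using ind_class[where R=R', OF R2] by blast
  qed
  show "?f \<in> iso (presentation R) (presentation R')"
    using hom bij by (simp add: iso_def)
qed

lemma gen_pow_succ: "gen_pow x (k+1) \<sim>[R] gen_pow x k @ [(x,False)]"
proof (cases "0 \<le> k")
  case True
  then have "nat (k+1) = Suc (nat k)" by simp
  then have "gen_pow x (k+1) = gen_pow x k @ [(x,False)]"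
    using True by (simp add: gen_pow_def replicate_append_same)
  then show ?thesis by (simp add: pres_rel.refl)
next
  case False
  then have e1: "nat (-k) = Suc (nat (-(k+1)))" by simp
  have e2: "gen_pow x (k+1) = replicate (nat (-(k+1))) (x,True)"
    using False by (auto simp: gen_pow_def)
  have "gen_pow x k @ [(x,False)] = replicate (nat (-(k+1))) (x,True) @ [(x,True),(x,\<not>True)] @ []"
    using False e1 by (simp add: gen_pow_def replicate_append_same[symmetric])
  moreover have "\<dots> \<sim>[R] replicate (nat (-(k+1))) (x,True) @ []" by (rule pres_rel.cancel)
  ultimately show ?thesis using e2 by (auto intro: pres_rel.sym)
qed

lemma gen_pow_pred: "gen_pow x (k-1) \<sim>[R] gen_pow x k @ [(x,True)]"
proof -
  have "gen_pow x k @ [(x,True)] \<sim>[R] (gen_pow x (k-1) @ [(x,False)]) @ [(x,True)]"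
    using pr_app_right[OF gen_pow_succ[of x "k-1" R]] by simp
  moreover have "(gen_pow x (k-1) @ [(x,False)]) @ [(x,True)] \<sim>[R] gen_pow x (k-1) @ []"
    using pres_rel.cancel[of "gen_pow x (k-1)" x False "[]" R] by simp
  ultimately show ?thesis by (auto intro: pres_rel.sym pres_rel.trans)
qed

lemma gen_pow_0[simp]: "gen_pow x 0 = []" by (simp add: gen_pow_def)

lemma gen_pow_merge: "gen_pow x a @ gen_pow x b \<sim>[R] gen_pow x (a+b)"
proof (induction b rule: int_induct[where k=0])
  case base then show ?case by (simp add: pres_rel.refl)
next
  case (step1 i)
  have "gen_pow x a @ gen_pow x (i+1) \<sim>[R] gen_pow x a @ gen_pow x i @ [(x,False)]"
    by (rule pr_app_left, rule gen_pow_succ)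
  moreover have "gen_pow x a @ gen_pow x i @ [(x,False)] \<sim>[R] gen_pow x (a+i) @ [(x,False)]"
    using pr_app_right[OF step1(2), of "[(x,False)]"] by simp
  moreover have "gen_pow x (a+i) @ [(x,False)] \<sim>[R] gen_pow x (a+(i+1))"
    using gen_pow_succ[of x "a+i" R] by (auto intro: pres_rel.sym simp: add.assoc)
  ultimately show ?case by (meson pres_rel.trans)
next
  case (step2 i)
  have "gen_pow x a @ gen_pow x (i-1) \<sim>[R] gen_pow x a @ gen_pow x i @ [(x,True)]"
    by (rule pr_app_left, rule gen_pow_pred)
  moreover have "gen_pow x a @ gen_pow x i @ [(x,True)] \<sim>[R] gen_pow x (a+i) @ [(x,True)]"
    using pr_app_right[OF step2(2), of "[(x,True)]"] by simp
  moreover have "gen_pow x (a+i) @ [(x,True)] \<sim>[R] gen_pow x (a+(i-1))"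
    using gen_pow_pred[of x "a+i" R] by (auto intro: pres_rel.sym simp: algebra_simps)
  ultimately show ?case by (meson pres_rel.trans)
qed

definition blk :: "('a \<times> int) list \<Rightarrow> 'a fword" where
  "blk bs = concat (map (\<lambda>(x,k). gen_pow x k) bs)"

lemma blk_simps[simp]: "blk [] = []" "blk ((x,k)#bs) = gen_pow x k @ blk bs"
  by (simp_all add: blk_def)

fun norm :: "('a \<times> int) list \<Rightarrow> ('a \<times> int) list" where
  "norm [] = []"
| "norm [b] = [b]"
| "norm ((x,a)#(y,b)#bs) = (if x = y then norm ((x,a+b)#bs) else (x,a) # norm ((y,b)#bs))"

lemma norm_rel: "blk bs \<sim>[R] blk (norm bs)"
proof (induction bs rule: norm.induct)
  case 1 then show ?case by (simp add: pres_rel.refl)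
next
  case (2 b) then show ?case by (simp add: pres_rel.refl)
next
  case (3 x a y b bs)
  show ?case
  proof (cases "x = y")
    case True
    have "blk ((x,a)#(y,b)#bs) \<sim>[R] blk ((x,a+b)#bs)"
      using pr_app_right[OF gen_pow_merge[of x a b R], of "blk bs"] True by simp
    with 3(1)[OF True] True show ?thesis by (auto intro: pres_rel.trans)
  next
    case False
    with 3(2)[OF False] show ?thesis by (simp add: pr_app_left)
  qed
qed

lemma blk_norm_eq: "norm bs = norm cs \<Longrightarrow> blk bs \<sim>[R] blk cs"
  by (metis norm_rel pres_rel.sym pres_rel.trans)

lemma gen_eq: "gen x = gen_pow x 1" by (simp add: gen_def gen_pow_def)

lemma word_inv_rep: "word_inv (replicate m (x,e)) = replicate m (x, \<not> e)"
  by (induction m) (auto simp: word_inv_def replicate_append_same)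

lemma word_inv_gen_pow[simp]: "word_inv (gen_pow x k) = gen_pow x (-k)"
  by (auto simp: gen_pow_def word_inv_rep)

lemma subst_rep: "s x = [(x,False)] \<Longrightarrow> subst s (replicate m (x,e)) = replicate m (x,e)"
  by (induction m) (auto simp: word_inv_def)

lemma subst_gen_pow: "s x = gen_pow x 1 \<Longrightarrow> subst s (gen_pow x k) = gen_pow x k"
  by (auto simp: gen_pow_def subst_rep)

lemma subst_gen_pow1: "subst s (gen_pow x 1) = s x"
  by (simp add: gen_pow_def)

lemma gen_pow_1: "gen_pow x 1 = [(x,False)]"
  by (simp add: gen_pow_def)

lemma subst_gen_pow_m1: "subst s (gen_pow x (-1)) = word_inv (s x)"
  by (simp add: gen_pow_def)

lemma rel_blk: "r \<in> R \<Longrightarrow> blk bs = r \<Longrightarrow> norm cs = norm bs \<Longrightarrow> blk cs \<sim>[R] []"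
  using pres_rel.relator[of r R "[]" "[]"] blk_norm_eq[of cs bs R]
  by (auto intro: pres_rel.trans)

theorem mainTheorem8:
  fixes n :: int
  shows "G_n n \<cong> braid3"
  unfolding G_n_def braid3_def
proof (rule iso_pres[where s="\<lambda>x. case x of GA \<Rightarrow> gen_pow GA 1 | GB \<Rightarrow> gen_pow GB 1 @ gen_pow GA (-n)"
   and t="\<lambda>x. case x of GA \<Rightarrow> gen_pow GA 1 | GB \<Rightarrow> gen_pow GB 1 @ gen_pow GA n"])
  fix r
  assume "r \<in> {relation (gen GA @ gen GB @ gen GA) (gen GB @ gen_pow GA (n + 1) @ gen GB)}"
  then have r: "r = relation (gen GA @ gen GB @ gen GA) (gen GB @ gen_pow GA (n + 1) @ gen GB)" by simp
  have "subst (\<lambda>x. case x of GA \<Rightarrow> gen_pow GA 1 | GB \<Rightarrow> gen_pow GB 1 @ gen_pow GA (-n)) r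
     = blk [(GA,1),(GB,1),(GA,-n),(GA,1),(GA,n),(GB,-1),(GA,-(n+1)),(GA,n),(GB,-1)]"
    unfolding r relation_def gen_eq by (simp add: subst_gen_pow subst_gen_pow1 subst_gen_pow_m1)
  also have "\<dots> \<sim>[{relation (gen GA @ gen GB @ gen GA) (gen GB @ gen GA @ gen GB)}] []"
    by (rule rel_blk[where bs="[(GA,1),(GB,1),(GA,1),(GB,-1),(GA,-1),(GB,-1)]"])
       (simp_all add: relation_def gen_eq)
  finally show "subst (\<lambda>x. case x of GA \<Rightarrow> gen_pow GA 1 | GB \<Rightarrow> gen_pow GB 1 @ gen_pow GA (-n)) r
     \<sim>[{relation (gen GA @ gen GB @ gen GA) (gen GB @ gen GA @ gen GB)}] []" .
next
  fix r
  assume "r \<in> {relation (gen GA @ gen GB @ gen GA) (gen GB @ gen GA @ gen GB)}"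
  then have r: "r = relation (gen GA @ gen GB @ gen GA) (gen GB @ gen GA @ gen GB)" by simp
  have "subst (\<lambda>x. case x of GA \<Rightarrow> gen_pow GA 1 | GB \<Rightarrow> gen_pow GB 1 @ gen_pow GA n) r
     = blk [(GA,1),(GB,1),(GA,n),(GA,1),(GA,-n),(GB,-1),(GA,-1),(GA,-n),(GB,-1)]"
    unfolding r relation_def gen_eq by (simp add: subst_gen_pow subst_gen_pow1 subst_gen_pow_m1)
  also have "\<dots> \<sim>[{relation (gen GA @ gen GB @ gen GA) (gen GB @ gen_pow GA (n + 1) @ gen GB)}] []"
    by (rule rel_blk[where bs="[(GA,1),(GB,1),(GA,1),(GB,-1),(GA,-(n+1)),(GB,-1)]"])
       (simp_all add: relation_def gen_eq)
  finally show "subst (\<lambda>x. case x of GA \<Rightarrow> gen_pow GA 1 | GB \<Rightarrow> gen_pow GB 1 @ gen_pow GA n) r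
     \<sim>[{relation (gen GA @ gen GB @ gen GA) (gen GB @ gen_pow GA (n + 1) @ gen GB)}] []" .
next
  fix x show "subst (\<lambda>x. case x of GA \<Rightarrow> gen_pow GA 1 | GB \<Rightarrow> gen_pow GB 1 @ gen_pow GA n)
      (case x of GA \<Rightarrow> gen_pow GA 1 | GB \<Rightarrow> gen_pow GB 1 @ gen_pow GA (-n))
     \<sim>[{relation (gen GA @ gen GB @ gen GA) (gen GB @ gen_pow GA (n + 1) @ gen GB)}] [(x,False)]"
  proof (cases x)
    case GA then show ?thesis by (simp add: gen_pow_def pres_rel.refl)
  next
    case GB
    have "blk [(GB,1),(GA,n),(GA,-n)] \<sim>[{relation (gen GA @ gen GB @ gen GA) (gen GB @ gen_pow GA (n + 1) @ gen GB)}] blk [(GB,1),(GA,0)]"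
      by (rule blk_norm_eq) simp
    then show ?thesis using GB by (simp add: subst_gen_pow subst_gen_pow1 gen_eq gen_pow_1)
  qed
next
  fix x show "subst (\<lambda>x. case x of GA \<Rightarrow> gen_pow GA 1 | GB \<Rightarrow> gen_pow GB 1 @ gen_pow GA (-n))
      (case x of GA \<Rightarrow> gen_pow GA 1 | GB \<Rightarrow> gen_pow GB 1 @ gen_pow GA n)
     \<sim>[{relation (gen GA @ gen GB @ gen GA) (gen GB @ gen GA @ gen GB)}] [(x,False)]"
  proof (cases x)
    case GA then show ?thesis by (simp add: gen_pow_def pres_rel.refl)
  next
    case GB
    have "blk [(GB,1),(GA,-n),(GA,n)] \<sim>[{relation (gen GA @ gen GB @ gen GA) (gen GB @ gen GA @ gen GB)}] blk [(GB,1),(GA,0)]"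
      by (rule blk_norm_eq) simp
    then show ?thesis using GB by (simp add: subst_gen_pow subst_gen_pow1 gen_eq gen_pow_1)
  qed
qed

end
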